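(* The adelic absolute value $a\mapsto\|a\|:=|a_\infty|\prod_{p\in\mathcal{P}}p^{-v_p(a)}$ is an upper semi-continuous function on the ring $\mathcal{A}$ of adeles of $\mathbb{Q}$.
   Context: $\mathcal{P}$ is the set of primes. $\mathcal{A}=\mathcal{A}_f\times\mathbb{R}$ with $\mathcal{A}_f=\{(a_p)\in\prod_p\mathbb{Q}_p: a_p\in\mathbb{Z}_p\text{ for almost all }p\}$ in the restricted product topology, and $\mathcal{A}$ has the product topology; $a=((a_p)_p,a_\infty)$. $v_p(a):=v_p(a_p)\in\mathbb{Z}\cup\{\infty\}$ is the $p$-adic valuation, with $p^{-\infty}=0$; the infinite product is interpreted as the limit over finite subsets of primes (it is $0$ if some $a_p=0$ or $v_p(a)>0$ for infinitely many $p$). *)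

theory Defs
  imports "HOL-Analysis.Analysis" "HOL-Computational_Algebra.Primes"
begin

text \<open>p-adic numbers, modelled by their (unique) canonical p-adic digit expansions
  x = sum over n of d n * p^n, with digits d n in {0..<p} and d n = 0 for n sufficiently
  negative.  Only the topology and the valuation of Q_p enter the statement.\<close>

definition Qp :: "nat \<Rightarrow> (int \<Rightarrow> nat) set" where
  "Qp p = {d. (\<forall>n. d n < p) \<and> (\<exists>N. \<forall>n<N. d n = 0)}"

definition Zp :: "nat \<Rightarrow> (int \<Rightarrow> nat) set" where
  "Zp p = {d \<in> Qp p. \<forall>n<0. d n = 0}"

text \<open>p-adic topology: x + p^n Z_p is the set of expansions agreeing with x below n.\<close>
definition qp_open :: "nat \<Rightarrow> (int \<Rightarrow> nat) set \<Rightarrow> bool" where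
  "qp_open p U \<longleftrightarrow> U \<subseteq> Qp p \<and>
     (\<forall>x\<in>U. \<exists>n::int. {y \<in> Qp p. \<forall>k<n. y k = x k} \<subseteq> U)"

text \<open>The factor p^(-v_p(x)), with p^(-\<infinity>) = 0 (x = 0 iff all digits vanish);
  v_p(x) is the position of the first nonzero digit.\<close>
definition padic_factor :: "nat \<Rightarrow> (int \<Rightarrow> nat) \<Rightarrow> real" where
  "padic_factor p x = (if \<forall>n. x n = 0 then 0
      else real p powr (- real_of_int (LEAST n. x n \<noteq> 0)))"

text \<open>Adeles of Q: a finite adele is a family (a_p) indexed by primes (normalised to 0 at
  non-primes), with a_p in Z_p for almost all p; then A = A_f x R.\<close>
definition finite_adeles :: "(nat \<Rightarrow> (int \<Rightarrow> nat)) set" where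
  "finite_adeles = {a. (\<forall>p. prime p \<longrightarrow> a p \<in> Qp p) \<and> (\<forall>p. \<not> prime p \<longrightarrow> a p = (\<lambda>_. 0))
      \<and> finite {p. prime p \<and> a p \<notin> Zp p}}"

definition adeles :: "((nat \<Rightarrow> (int \<Rightarrow> nat)) \<times> real) set" where
  "adeles = finite_adeles \<times> UNIV"

text \<open>Basic open sets of the restricted product topology times R:
  (prod_p W_p) x V with W_p open in Q_p, W_p = Z_p for almost all p, V open in R.\<close>
definition adele_basic_open ::
  "(nat \<Rightarrow> (int \<Rightarrow> nat) set) \<Rightarrow> real set \<Rightarrow> ((nat \<Rightarrow> (int \<Rightarrow> nat)) \<times> real) set" where
  "adele_basic_open W V = {(b, r). b \<in> finite_adeles \<and> r \<in> V \<and> (\<forall>p. prime p \<longrightarrow> b p \<in> W p)}"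

definition adele_open :: "((nat \<Rightarrow> (int \<Rightarrow> nat)) \<times> real) set \<Rightarrow> bool" where
  "adele_open U \<longleftrightarrow> U \<subseteq> adeles \<and>
     (\<forall>x\<in>U. \<exists>W V. open V \<and> (\<forall>p. prime p \<longrightarrow> qp_open p (W p))
        \<and> finite {p. prime p \<and> W p \<noteq> Zp p}
        \<and> x \<in> adele_basic_open W V \<and> adele_basic_open W V \<subseteq> U)"

definition adele_abs :: "((nat \<Rightarrow> (int \<Rightarrow> nat)) \<times> real) \<Rightarrow> real" where
  "adele_abs a = \<bar>snd a\<bar> *
     Lim (finite_subsets_at_top {p. prime p}) (\<lambda>S. \<Prod>p\<in>S. padic_factor p (fst a p))"

end

theory Submission
  imports Defs
begin

lemma prod_sub_le:
  fixes g :: "nat \<Rightarrow> real"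
  assumes "finite T" "T0 \<subseteq> T" "\<forall>p\<in>T. 0 \<le> g p" "\<forall>p\<in>T-T0. g p \<le> 1"
  shows "prod g T \<le> prod g T0"
proof -
  have e: "prod g T = prod g (T - T0) * prod g T0" using prod.subset_diff[OF assms(2,1)] by simp
  have "prod g (T - T0) \<le> 1" using assms by (intro prod_le_1) auto
  moreover have "0 \<le> prod g T0" using assms by (intro prod_nonneg) auto
  ultimately show ?thesis unfolding e using mult_right_mono[of "prod g (T - T0)" 1 "prod g T0"] by simp
qed

lemma net_lim:
  fixes g :: "nat \<Rightarrow> real"
  assumes F: "finite F" "F \<subseteq> P" and g0: "\<forall>p\<in>P. 0 \<le> g p" and g1: "\<forall>p\<in>P-F. g p \<le> 1"
  defines "L \<equiv> Inf {prod g T | T. finite T \<and> F \<subseteq> T \<and> T \<subseteq> P}"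
  shows "Lim (finite_subsets_at_top P) (\<lambda>S. \<Prod>p\<in>S. g p) = L"
    and "0 \<le> L"
    and "\<And>T. finite T \<Longrightarrow> F \<subseteq> T \<Longrightarrow> T \<subseteq> P \<Longrightarrow> L \<le> prod g T"
    and "\<And>e. e > 0 \<Longrightarrow> \<exists>T. finite T \<and> F \<subseteq> T \<and> T \<subseteq> P \<and> prod g T < L + e"
proof -
  define X where "X = {prod g T | T. finite T \<and> F \<subseteq> T \<and> T \<subseteq> P}"
  have ne: "X \<noteq> {}" using F unfolding X_def by blast
  have nn: "\<forall>x\<in>X. 0 \<le> x" unfolding X_def using g0 by (auto intro!: prod_nonneg)
  have bdd: "bdd_below X" using nn by (auto simp: bdd_below_def)
  show L0: "0 \<le> L" unfolding L_def X_def[symmetric] using ne nn by (intro cInf_greatest) auto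
  show low: "\<And>T. finite T \<Longrightarrow> F \<subseteq> T \<Longrightarrow> T \<subseteq> P \<Longrightarrow> L \<le> prod g T"
    unfolding L_def X_def[symmetric] using bdd by (intro cInf_lower) (auto simp: X_def)
  show "\<And>e. e > 0 \<Longrightarrow> \<exists>T. finite T \<and> F \<subseteq> T \<and> T \<subseteq> P \<and> prod g T < L + e"
  proof -
    fix e :: real assume "e > 0"
    then have "Inf X < L + e" unfolding L_def X_def by simp
    from cInf_lessD[OF ne this] show "\<exists>T. finite T \<and> F \<subseteq> T \<and> T \<subseteq> P \<and> prod g T < L + e"
      unfolding X_def by blast
  qed
  have "((\<lambda>S. \<Prod>p\<in>S. g p) \<longlongrightarrow> L) (finite_subsets_at_top P)"
  proof (rule order_tendstoI)
    fix a assume "a < L"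
    show "\<forall>\<^sub>F S in finite_subsets_at_top P. a < (\<Prod>p\<in>S. g p)"
      unfolding eventually_finite_subsets_at_top
      using F low \<open>a < L\<close> by (intro exI[of _ F]) (auto intro: less_le_trans)
  next
    fix a assume "L < a"
    then have "Inf X < a" unfolding L_def X_def by simp
    from cInf_lessD[OF ne this] obtain T0 where T0: "finite T0" "F \<subseteq> T0" "T0 \<subseteq> P" "prod g T0 < a"
      unfolding X_def by blast
    show "\<forall>\<^sub>F S in finite_subsets_at_top P. (\<Prod>p\<in>S. g p) < a"
      unfolding eventually_finite_subsets_at_top
    proof (intro exI[of _ T0] conjI allI impI)
      fix Y assume Y: "finite Y \<and> T0 \<subseteq> Y \<and> Y \<subseteq> P"
      have "prod g Y \<le> prod g T0"
        using Y T0 g0 g1 by (intro prod_sub_le) auto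
      then show "(\<Prod>p\<in>Y. g p) < a" using T0 by simp
    qed (use T0 in auto)
  qed
  then show "Lim (finite_subsets_at_top P) (\<lambda>S. \<Prod>p\<in>S. g p) = L"
    by (intro tendsto_Lim) auto
qed

lemma least_digit:
  fixes d :: "int \<Rightarrow> nat"
  assumes "\<forall>n<N. d n = 0" "d m \<noteq> 0"
  shows "d (LEAST n. d n \<noteq> 0) \<noteq> 0 \<and> (\<forall>k. d k \<noteq> 0 \<longrightarrow> (LEAST n. d n \<noteq> 0) \<le> k)"
proof -
  define j where "j = (LEAST k::nat. d (N + int k) \<noteq> 0)"
  have m: "m \<ge> N" using assms by (meson not_le)
  have "d (N + int (nat (m - N))) \<noteq> 0" using m assms by simp
  then have j1: "d (N + int j) \<noteq> 0" unfolding j_def by (rule LeastI)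
  have j2: "N + int j \<le> k" if "d k \<noteq> 0" for k
  proof -
    have k: "k \<ge> N" using assms that by (meson not_le)
    then have "d (N + int (nat (k - N))) \<noteq> 0" using that by simp
    then have "j \<le> nat (k - N)" unfolding j_def by (rule Least_le)
    then show ?thesis using k by linarith
  qed
  have "(LEAST n. d n \<noteq> 0) = N + int j" by (rule Least_equality) (use j1 j2 in auto)
  then show ?thesis using j1 j2 by auto
qed

lemma pf_nonneg: "0 \<le> padic_factor p x"
  by (simp add: padic_factor_def)

lemma pf_le1:
  assumes "prime p" "x \<in> Zp p"
  shows "padic_factor p x \<le> 1"
proof (cases "\<forall>n. x n = 0")
  case True then show ?thesis by (simp add: padic_factor_def)
next
  case False
  then obtain m where m: "x m \<noteq> 0" by auto
  have z: "\<forall>n<0. x n = 0" using assms(2) by (simp add: Zp_def)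
  from least_digit[OF z m] have "(LEAST n. x n \<noteq> 0) \<ge> 0" using z by (meson not_le)
  moreover have "real p \<ge> 1" using assms(1) prime_ge_1_nat by auto
  ultimately have "real p powr (- real_of_int (LEAST n. x n \<noteq> 0)) \<le> real p powr 0"
    by (intro powr_mono) auto
  then show ?thesis using False \<open>real p \<ge> 1\<close> by (simp add: padic_factor_def)
qed

lemma pf_local:
  assumes "prime p" "x \<in> Qp p" "t > 0"
  shows "\<exists>n. \<forall>y. (\<forall>k<n. y k = x k) \<longrightarrow> padic_factor p y \<le> padic_factor p x + t"
proof (cases "\<forall>n. x n = 0")
  case True
  have p1: "1 < real p" using assms(1) prime_gt_1_nat by auto
  obtain k :: nat where k: "1 / t < real p ^ k" using real_arch_pow[OF p1] by blast
  have pk: "real p powr (- real k) < t"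
  proof -
    have "real p powr (- real k) = 1 / real p ^ k" using p1 by (simp add: powr_minus powr_realpow divide_inverse)
    also have "\<dots> < t" using k assms(3) p1 by (simp add: field_simps)
    finally show ?thesis .
  qed
  show ?thesis
  proof (intro exI[of _ "int k"] allI impI)
    fix y :: "int \<Rightarrow> nat" assume y: "\<forall>j<int k. y j = x j"
    show "padic_factor p y \<le> padic_factor p x + t"
    proof (cases "\<forall>n. y n = 0")
      case True then show ?thesis using assms by (simp add: padic_factor_def True)
    next
      case False
      then obtain m where m: "y m \<noteq> 0" by auto
      have z: "\<forall>j<int k. y j = 0" using y \<open>\<forall>n. x n = 0\<close> by auto
      from least_digit[OF z m] have "(LEAST n. y n \<noteq> 0) \<ge> int k" using z by (meson not_le)
      then have "real p powr (- real_of_int (LEAST n. y n \<noteq> 0)) \<le> real p powr (- real k)"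
        using p1 by (intro powr_mono) auto
      then show ?thesis using False pk \<open>\<forall>n. x n = 0\<close> by (auto simp add: padic_factor_def)
    qed
  qed
next
  case False
  then obtain m where m: "x m \<noteq> 0" by auto
  obtain N where N: "\<forall>n<N. x n = 0" using assms(2) by (auto simp: Qp_def)
  define L where "L = (LEAST n. x n \<noteq> 0)"
  from least_digit[OF N m] have L1: "x L \<noteq> 0" and L2: "\<forall>k. x k \<noteq> 0 \<longrightarrow> L \<le> k"
    unfolding L_def by auto
  show ?thesis
  proof (intro exI[of _ "L + 1"] allI impI)
    fix y :: "int \<Rightarrow> nat" assume y: "\<forall>k<L+1. y k = x k"
    have yL: "y L \<noteq> 0" using y L1 by auto
    have "(LEAST n. y n \<noteq> 0) = L"
    proof (rule Least_equality)
      show "y L \<noteq> 0" by fact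
      fix k assume "y k \<noteq> 0"
      then show "L \<le> k" using y L2 by (metis not_le less_add_one less_trans)
    qed
    then have "padic_factor p y = padic_factor p x"
      using yL False by (auto simp: padic_factor_def L_def)
    then show "padic_factor p y \<le> padic_factor p x + t" using assms by simp
  qed
qed

theorem lemma3p5:
  "\<forall>x\<in>adeles. \<forall>c::real. adele_abs x < c \<longrightarrow>
     (\<exists>U. adele_open U \<and> x \<in> U \<and> (\<forall>y\<in>U. adele_abs y < c))"
proof (intro ballI allI impI)
  fix x c assume xA: "x \<in> adeles" and xc: "adele_abs x < c"
  obtain a r where x: "x = (a, r)" by (cases x)
  have a: "a \<in> finite_adeles" using xA x by (simp add: adeles_def)
  define P where "P = {p::nat. prime p}"
  define g where "g = (\<lambda>p. padic_factor p (a p))"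
  define F where "F = {p. prime p \<and> a p \<notin> Zp p}"
  have Ffin: "finite F" and FP: "F \<subseteq> P" using a by (auto simp: F_def P_def finite_adeles_def)
  have g0: "\<forall>p\<in>P. 0 \<le> g p" by (simp add: g_def pf_nonneg)
  have g1: "\<forall>p\<in>P-F. g p \<le> 1" by (auto simp: g_def P_def F_def intro: pf_le1)
  note NL = net_lim[OF Ffin FP g0 g1]
  define L where "L = Inf {prod g T | T. finite T \<and> F \<subseteq> T \<and> T \<subseteq> P}"
  have absx: "adele_abs x = \<bar>r\<bar> * L"
    using NL(1) unfolding adele_abs_def x L_def P_def g_def by simp
  obtain S where S: "finite S" "F \<subseteq> S" "S \<subseteq> P" "\<bar>r\<bar> * prod g S < c"
  proof (cases "r = 0")
    case True then show ?thesis using that[of F] Ffin FP xc absx by auto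
  next
    case False
    define e where "e = c / \<bar>r\<bar> - L"
    have "\<bar>r\<bar> * L < c" using xc absx by simp
    then have "L < c / \<bar>r\<bar>" using False by (simp add: field_simps)
    then have "e > 0" by (simp add: e_def)
    from NL(4)[OF this, folded L_def] obtain T where T: "finite T" "F \<subseteq> T" "T \<subseteq> P" "prod g T < c / \<bar>r\<bar>"
      unfolding e_def by auto
    then have "\<bar>r\<bar> * prod g T < c" using False by (simp add: field_simps)
    then show ?thesis using that T by blast
  qed
  define h where "h = (\<lambda>t::real. (\<bar>r\<bar> + t) * (\<Prod>p\<in>S. g p + t))"
  have "(h \<longlongrightarrow> h 0) (at_right 0)"
    unfolding h_def by (intro tendsto_intros)
  moreover have "h 0 < c" using S(4) by (simp add: h_def)
  ultimately have "\<forall>\<^sub>F t in at_right 0. h t < c" by (rule order_tendstoD(2))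
  then obtain b where b: "b > 0" "\<forall>t>0. t < b \<longrightarrow> h t < c"
    unfolding eventually_at_right_field by auto
  define t where "t = b / 2"
  have t: "t > 0" "h t < c" using b by (auto simp: t_def)
  have "\<forall>p\<in>S. \<exists>n. \<forall>y. (\<forall>k<n. y k = a p k) \<longrightarrow> padic_factor p y \<le> g p + t"
  proof
    fix p assume "p \<in> S"
    then have pp: "prime p" using S(3) by (auto simp: P_def)
    then have "a p \<in> Qp p" using a by (auto simp: finite_adeles_def)
    from pf_local[OF pp this t(1)] show "\<exists>n. \<forall>y. (\<forall>k<n. y k = a p k) \<longrightarrow> padic_factor p y \<le> g p + t"
      by (simp add: g_def)
  qed
  then obtain n where n: "\<forall>p\<in>S. \<forall>y. (\<forall>k<n p. y k = a p k) \<longrightarrow> padic_factor p y \<le> g p + t"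
    by metis
  define W where "W = (\<lambda>p. if p \<in> S then {y \<in> Qp p. \<forall>k<n p. y k = a p k} else Zp p)"
  define U where "U = adele_basic_open W (ball r t)"
  have qW: "\<forall>p. prime p \<longrightarrow> qp_open p (W p)"
  proof (intro allI impI)
    fix p :: nat assume "prime p"
    show "qp_open p (W p)"
    proof (cases "p \<in> S")
      case True
      show ?thesis unfolding qp_open_def W_def using True
        by (intro conjI ballI exI[of _ "n p"]) auto
    next
      case False
      show ?thesis unfolding qp_open_def W_def using False
        by (intro conjI ballI exI[of _ "0::int"]) (auto simp: Zp_def)
    qed
  qed
  have Wfin: "finite {p. prime p \<and> W p \<noteq> Zp p}"
    by (rule finite_subset[OF _ S(1)]) (auto simp: W_def)
  show "\<exists>U. adele_open U \<and> x \<in> U \<and> (\<forall>y\<in>U. adele_abs y < c)"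
  proof (intro exI[of _ U] conjI ballI)
    show "adele_open U" unfolding adele_open_def
    proof (intro conjI ballI)
      show "U \<subseteq> adeles" by (auto simp: U_def adele_basic_open_def adeles_def)
      fix z assume "z \<in> U"
      then show "\<exists>W V. open V \<and> (\<forall>p. prime p \<longrightarrow> qp_open p (W p)) \<and> finite {p. prime p \<and> W p \<noteq> Zp p}
            \<and> z \<in> adele_basic_open W V \<and> adele_basic_open W V \<subseteq> U"
        using qW Wfin unfolding U_def by (intro exI[of _ W] exI[of _ "ball r t"]) auto
    qed
    show "x \<in> U"
      unfolding U_def adele_basic_open_def x using a t(1) S(2)
      by (auto simp: W_def F_def finite_adeles_def)
  next
    fix y assume "y \<in> U"
    then obtain bb s where y: "y = (bb, s)" "bb \<in> finite_adeles" "dist r s < t"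
      "\<forall>p. prime p \<longrightarrow> bb p \<in> W p"
      unfolding U_def adele_basic_open_def by auto
    define gb where "gb = (\<lambda>p. padic_factor p (bb p))"
    have gb0: "\<forall>p\<in>P. 0 \<le> gb p" by (simp add: gb_def pf_nonneg)
    have gb1: "\<forall>p\<in>P-S. gb p \<le> 1"
    proof
      fix p assume "p \<in> P - S"
      then have "prime p" "bb p \<in> Zp p" using y(4) by (auto simp: P_def W_def)
      then show "gb p \<le> 1" unfolding gb_def by (rule pf_le1)
    qed
    note NB = net_lim[OF S(1) S(3) gb0 gb1]
    define Lb where "Lb = Inf {prod gb T | T. finite T \<and> S \<subseteq> T \<and> T \<subseteq> P}"
    have absy: "adele_abs y = \<bar>s\<bar> * Lb"
      using NB(1) unfolding adele_abs_def y(1) Lb_def P_def gb_def by simp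
    have Lb0: "0 \<le> Lb" using NB(2) by (simp add: Lb_def)
    have LbS: "Lb \<le> prod gb S" using NB(3)[OF S(1) order_refl S(3)] by (simp add: Lb_def)
    have "prod gb S \<le> (\<Prod>p\<in>S. g p + t)"
    proof (rule prod_mono)
      fix p assume "p \<in> S"
      then have "prime p" using S(3) by (auto simp: P_def)
      then have "bb p \<in> W p" using y(4) by auto
      then have "\<forall>k<n p. bb p k = a p k" using \<open>p \<in> S\<close> by (auto simp: W_def)
      then show "0 \<le> gb p \<and> gb p \<le> g p + t" using n \<open>p \<in> S\<close> by (auto simp: gb_def pf_nonneg)
    qed
    then have "Lb \<le> (\<Prod>p\<in>S. g p + t)" using LbS by linarith
    moreover have "\<bar>s\<bar> \<le> \<bar>r\<bar> + t" using y(3) by (simp add: dist_real_def)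
    ultimately have "\<bar>s\<bar> * Lb \<le> (\<bar>r\<bar> + t) * (\<Prod>p\<in>S. g p + t)"
      using Lb0 t(1) by (intro mult_mono) auto
    then show "adele_abs y < c" using absy t(2) by (simp add: h_def)
  qed
qed

end
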